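(* Let $\Pi=(P,\mathcal{L})$ and $\Pi'=(P',\mathcal{L}')$ be $n$-dimensional linear spaces, $n\ge 4$, both satisfying the exchange axiom and the axiom (P2). If $f:\mathcal{L}\to\mathcal{L}'$ is an injection sending every base subset of $\mathcal{G}_1(\Pi)=\mathcal{L}$ to a base subset of $\mathcal{G}_1(\Pi')=\mathcal{L}'$, then there is a strong embedding $g$ of $\Pi$ to $\Pi'$ such that $f(L)=\overline{g(L)}$ for every line $L\in\mathcal{L}$.
   Context: A linear space $\Pi=(P,\mathcal{L})$ is a set $P$ of points with a family $\mathcal{L}$ of proper subsets (lines) such that each line has at least two points and any two distinct points $p,q$ lie on exactly one line $pq$. Points are collinear if some line contains them. A subspace is a set $S\subset P$ with $pq\subset S$ for all distinct $p,q\in S$; $\overline{X}$ is the smallest subspace containing $X$. A set $X$ is independent if $\overline{X}$ is not spanned by a proper subset of $X$; a base of a subspace $S$ is an independent set spanning $S$. A subspace is $m$-dimensional if $m+1$ is the smallest number of points spanning it. Exchange axiom: for every $X\subset P$ and $p_1,p_2\in P\setminus\overline{X}$, $p_2\in\overline{X\cup\{p_1\}}$ implies $p_1\in\overline{X\cup\{p_2\}}$. Axiom (P2): every line contains at least three points. $\mathcal{G}_k(\Pi)$ is the set of $k$-dimensional subspaces. For a base $B$ of $\Pi$, the base subset of $\mathcal{G}_k(\Pi)$ associated with $B$ is the set of all $k$-dimensional subspaces spanned by points of $B$. A strong embedding of $\Pi$ to $\Pi'$ is an injection $g:P\to P'$ sending collinear triples to collinear triples, non-collinear triples to non-collinear triples,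 and independent sets to independent sets. *)

theory Defs
  imports Main
begin

definition linear_space :: "'a set \<Rightarrow> 'a set set \<Rightarrow> bool" where
  "linear_space P L \<longleftrightarrow>
     (\<forall>l\<in>L. l \<subset> P \<and> (\<exists>p q. p \<in> l \<and> q \<in> l \<and> p \<noteq> q)) \<and>
     (\<forall>p\<in>P. \<forall>q\<in>P. p \<noteq> q \<longrightarrow> (\<exists>!l. l \<in> L \<and> p \<in> l \<and> q \<in> l))"

definition collinear_in :: "'a set set \<Rightarrow> 'a set \<Rightarrow> bool" where
  "collinear_in L X \<longleftrightarrow> (\<exists>l\<in>L. X \<subseteq> l)"

definition subspace :: "'a set \<Rightarrow> 'a set set \<Rightarrow> 'a set \<Rightarrow> bool" where
  "subspace P L S \<longleftrightarrow> S \<subseteq> P \<and>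
     (\<forall>p\<in>S. \<forall>q\<in>S. p \<noteq> q \<longrightarrow> (\<forall>l\<in>L. p \<in> l \<and> q \<in> l \<longrightarrow> l \<subseteq> S))"

definition span :: "'a set \<Rightarrow> 'a set set \<Rightarrow> 'a set \<Rightarrow> 'a set" where
  "span P L X = \<Inter> {S. subspace P L S \<and> X \<subseteq> S}"

definition independent :: "'a set \<Rightarrow> 'a set set \<Rightarrow> 'a set \<Rightarrow> bool" where
  "independent P L X \<longleftrightarrow> X \<subseteq> P \<and> (\<forall>Y. Y \<subset> X \<longrightarrow> span P L Y \<noteq> span P L X)"

definition is_base :: "'a set \<Rightarrow> 'a set set \<Rightarrow> 'a set \<Rightarrow> 'a set \<Rightarrow> bool" where
  "is_base P L S B \<longleftrightarrow> independent P L B \<and> span P L B = S"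

definition is_dim :: "'a set \<Rightarrow> 'a set set \<Rightarrow> 'a set \<Rightarrow> nat \<Rightarrow> bool" where
  "is_dim P L S m \<longleftrightarrow> subspace P L S \<and>
     (\<exists>X. finite X \<and> X \<subseteq> P \<and> card X = m + 1 \<and> span P L X = S) \<and>
     (\<forall>X. finite X \<and> X \<subseteq> P \<and> span P L X = S \<longrightarrow> m + 1 \<le> card X)"

definition Grass :: "'a set \<Rightarrow> 'a set set \<Rightarrow> nat \<Rightarrow> 'a set set" where
  "Grass P L k = {S. is_dim P L S k}"

definition base_subset :: "'a set \<Rightarrow> 'a set set \<Rightarrow> nat \<Rightarrow> 'a set \<Rightarrow> 'a set set" where
  "base_subset P L k B = {S \<in> Grass P L k. \<exists>X. X \<subseteq> B \<and> span P L X = S}"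

definition exchange_axiom :: "'a set \<Rightarrow> 'a set set \<Rightarrow> bool" where
  "exchange_axiom P L \<longleftrightarrow>
     (\<forall>X p1 p2. X \<subseteq> P \<longrightarrow> p1 \<in> P - span P L X \<longrightarrow> p2 \<in> P - span P L X \<longrightarrow>
        p2 \<in> span P L (X \<union> {p1}) \<longrightarrow> p1 \<in> span P L (X \<union> {p2}))"

definition axiom_P2 :: "'a set set \<Rightarrow> bool" where
  "axiom_P2 L \<longleftrightarrow> (\<forall>l\<in>L. \<exists>a b c. a \<in> l \<and> b \<in> l \<and> c \<in> l \<and> a \<noteq> b \<and> a \<noteq> c \<and> b \<noteq> c)"

definition strong_embedding ::
  "'a set \<Rightarrow> 'a set set \<Rightarrow> 'b set \<Rightarrow> 'b set set \<Rightarrow> ('a \<Rightarrow> 'b) \<Rightarrow> bool" where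
  "strong_embedding P L P' L' g \<longleftrightarrow>
     inj_on g P \<and> g ` P \<subseteq> P' \<and>
     (\<forall>x\<in>P. \<forall>y\<in>P. \<forall>z\<in>P. x \<noteq> y \<and> x \<noteq> z \<and> y \<noteq> z \<longrightarrow>
        (collinear_in L {x, y, z} \<longrightarrow> collinear_in L' {g x, g y, g z}) \<and>
        (\<not> collinear_in L {x, y, z} \<longrightarrow> \<not> collinear_in L' {g x, g y, g z})) \<and>
     (\<forall>X. independent P L X \<longrightarrow> independent P' L' (g ` X))"

end

theory Submission
  imports Defs
begin



locale LS =
  fixes P :: "'a set" and L :: "'a set set" and n :: nat
  assumes ls: "linear_space P L" and exch: "exchange_axiom P L"
    and dim: "is_dim P L P n" and p2: "axiom_P2 L"
begin

abbreviation sp where "sp X \<equiv> span P L X"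

lemma line_sub: "l \<in> L \<Longrightarrow> l \<subseteq> P"
  using ls unfolding linear_space_def by blast

lemma line_two: "l \<in> L \<Longrightarrow> \<exists>p q. p \<in> l \<and> q \<in> l \<and> p \<noteq> q"
  using ls unfolding linear_space_def by blast

lemma uniq_line: assumes "p \<in> P" "q \<in> P" "p \<noteq> q" shows "\<exists>!l. l \<in> L \<and> p \<in> l \<and> q \<in> l"
proof -
  have h: "\<forall>p\<in>P. \<forall>q\<in>P. p \<noteq> q \<longrightarrow> (\<exists>!l. l \<in> L \<and> p \<in> l \<and> q \<in> l)"
    using ls unfolding linear_space_def by (rule conjunct2)
  show ?thesis using mp[OF bspec[OF bspec[OF h assms(1)] assms(2)] assms(3)] .
qed

lemma ex1_eq: "\<exists>!x. Q x \<Longrightarrow> Q a \<Longrightarrow> Q b \<Longrightarrow> a = b"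
  by blast

lemma two_lines: assumes "l1 \<in> L" "l2 \<in> L" "p \<in> l1" "p \<in> l2" "q \<in> l1" "q \<in> l2" "p \<noteq> q" shows "l1 = l2"
proof -
  have "p \<in> P" "q \<in> P" using line_sub assms by blast+
  from uniq_line[OF this assms(7)] show ?thesis
    by (rule ex1_eq) (use assms in auto)
qed

lemma subspace_P: "subspace P L P"
  unfolding subspace_def using line_sub by blast

lemma subspace_line: assumes "l \<in> L" shows "subspace P L l"
proof -
  have "l' \<subseteq> l" if "p \<in> l" "q \<in> l" "p \<noteq> q" "l' \<in> L" "p \<in> l'" "q \<in> l'" for p q l'
    using two_lines[OF assms that(4) that(1) that(5) that(2) that(6) that(3)] by simp
  thus ?thesis unfolding subspace_def using line_sub assms by blast
qed

lemma subspace_span: assumes "X \<subseteq> P" shows "subspace P L (sp X)"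
proof -
  have "sp X \<subseteq> P" unfolding span_def using subspace_P assms by blast
  moreover have "\<forall>p\<in>sp X. \<forall>q\<in>sp X. p \<noteq> q \<longrightarrow> (\<forall>l\<in>L. p \<in> l \<and> q \<in> l \<longrightarrow> l \<subseteq> sp X)"
    unfolding span_def subspace_def by blast
  ultimately show ?thesis unfolding subspace_def by blast
qed

lemma span_sub_P: "X \<subseteq> P \<Longrightarrow> sp X \<subseteq> P"
  using subspace_span unfolding subspace_def by blast

lemma span_inc: "X \<subseteq> P \<Longrightarrow> X \<subseteq> sp X"
  unfolding span_def by blast

lemma span_least: "subspace P L S \<Longrightarrow> X \<subseteq> S \<Longrightarrow> sp X \<subseteq> S"
  unfolding span_def by blast

lemma span_mono: "X \<subseteq> Y \<Longrightarrow> Y \<subseteq> P \<Longrightarrow> sp X \<subseteq> sp Y"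
  by (meson span_inc span_least subspace_span subset_trans)

lemma span_span: "X \<subseteq> sp Y \<Longrightarrow> Y \<subseteq> P \<Longrightarrow> sp X \<subseteq> sp Y"
  by (simp add: span_least subspace_span)

lemma span_empty: "sp {} = {}"
proof -
  have "subspace P L {}" unfolding subspace_def by blast
  thus ?thesis using span_least by blast
qed

lemma span_single: "p \<in> P \<Longrightarrow> sp {p} = {p}"
proof -
  assume "p \<in> P"
  have "subspace P L {p}" unfolding subspace_def using \<open>p \<in> P\<close> by blast
  hence "sp {p} \<subseteq> {p}" using span_least by blast
  moreover have "{p} \<subseteq> sp {p}" using span_inc \<open>p \<in> P\<close> by blast
  ultimately show ?thesis by blast
qed

lemma span_two_line: assumes "l \<in> L" "p \<in> l" "q \<in> l" "p \<noteq> q" shows "sp {p, q} = l"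
proof
  have "{p,q} \<subseteq> l" using assms(2,3) by simp
  thus "sp {p,q} \<subseteq> l" by (rule span_least[OF subspace_line[OF assms(1)]])
  have pq: "{p,q} \<subseteq> P" using line_sub assms by blast
  have "{p,q} \<subseteq> sp {p,q}" using span_inc[OF pq] .
  thus "l \<subseteq> sp {p,q}" using subspace_span[OF pq] assms unfolding subspace_def by blast
qed

lemma span_two: assumes "p \<in> P" "q \<in> P" "p \<noteq> q" shows "sp {p, q} \<in> L"
proof -
  obtain l where "l \<in> L" "p \<in> l" "q \<in> l" using uniq_line assms by blast
  thus ?thesis using span_two_line assms by simp
qed

lemma span_two_swap: assumes "p \<in> P" "q \<in> P" "p \<noteq> q" "z \<in> sp {p,q}" "z \<noteq> p"
  shows "sp {p, z} = sp {p, q}"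
proof -
  have l: "sp {p,q} \<in> L" using span_two assms by blast
  have "{p,q} \<subseteq> sp {p,q}" using span_inc[of "{p,q}"] assms(1,2) by simp
  hence "p \<in> sp {p,q}" by simp
  thus ?thesis using span_two_line[OF l] assms(4,5) by blast
qed

lemma indep_iff: "independent P L X \<longleftrightarrow> X \<subseteq> P \<and> (\<forall>x\<in>X. x \<notin> sp (X - {x}))"
proof
  assume a: "independent P L X"
  hence XP: "X \<subseteq> P" unfolding independent_def by blast
  have "x \<notin> sp (X - {x})" if "x \<in> X" for x
  proof
    assume "x \<in> sp (X - {x})"
    hence "X \<subseteq> sp (X - {x})" using span_inc[of "X - {x}"] XP by blast
    hence "sp X \<subseteq> sp (X - {x})" using span_span XP by blast
    moreover have "sp (X - {x}) \<subseteq> sp X" using span_mono[of "X - {x}" X] XP by blast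
    moreover have "X - {x} \<subset> X" using that by blast
    ultimately show False using a unfolding independent_def by blast
  qed
  thus "X \<subseteq> P \<and> (\<forall>x\<in>X. x \<notin> sp (X - {x}))" using XP by blast
next
  assume a: "X \<subseteq> P \<and> (\<forall>x\<in>X. x \<notin> sp (X - {x}))"
  have "sp Y \<noteq> sp X" if Ys: "Y \<subset> X" for Y
  proof
    assume e: "sp Y = sp X"
    obtain x where x: "x \<in> X" "x \<notin> Y" using Ys by blast
    have "Y \<subseteq> X - {x}" using Ys x by blast
    hence "sp Y \<subseteq> sp (X - {x})" using span_mono[of Y "X - {x}"] a by blast
    moreover have "x \<in> sp X" using span_inc a x by blast
    ultimately show False using a x e by blast
  qed
  thus "independent P L X" unfolding independent_def using a by blast
qed

lemma indep_sub: assumes "independent P L X" "Y \<subseteq> X" shows "independent P L Y"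
proof -
  have XP: "X \<subseteq> P" using assms(1) indep_iff by blast
  have "y \<notin> sp (Y - {y})" if "y \<in> Y" for y
  proof
    assume "y \<in> sp (Y - {y})"
    moreover have "sp (Y - {y}) \<subseteq> sp (X - {y})" using span_mono[of "Y - {y}" "X - {y}"] assms(2) XP by blast
    ultimately show False using assms that indep_iff by blast
  qed
  thus ?thesis unfolding indep_iff using XP assms(2) by blast
qed

lemma indep_notin: assumes "independent P L X" "A \<subseteq> X" "x \<in> X" "x \<in> sp A" shows "x \<in> A"
proof (rule ccontr)
  assume "x \<notin> A"
  have XP: "X \<subseteq> P" using assms(1) indep_iff by blast
  have "A \<subseteq> X - {x}" using assms(2) \<open>x \<notin> A\<close> by blast
  hence "sp A \<subseteq> sp (X - {x})" using span_mono XP by blast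
  thus False using assms indep_iff by blast
qed

lemma indep_insert: assumes "independent P L X" "p \<in> P" "p \<notin> sp X"
  shows "independent P L (insert p X)"
proof -
  have XP: "X \<subseteq> P" using assms indep_iff by blast
  have "x \<notin> sp (insert p X - {x})" if "x \<in> insert p X" for x
  proof (cases "x = p")
    case True
    hence "insert p X - {x} \<subseteq> X" by blast
    thus ?thesis using span_mono XP assms True by blast
  next
    case False
    hence xX: "x \<in> X" using that by blast
    have e: "insert p X - {x} = (X - {x}) \<union> {p}" using False by blast
    show ?thesis
    proof
      assume h: "x \<in> sp (insert p X - {x})"
      have nx: "x \<notin> sp (X - {x})" using assms(1) xX indep_iff by blast
      have np: "p \<notin> sp (X - {x})" using span_mono[of "X - {x}" X] XP assms(3) by blast
      have ex: "\<And>X p1 p2. X \<subseteq> P \<Longrightarrow> p1 \<in> P - sp X \<Longrightarrow> p2 \<in> P - sp X \<Longrightarrow>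
        p2 \<in> sp (X \<union> {p1}) \<Longrightarrow> p1 \<in> sp (X \<union> {p2})"
        using exch unfolding exchange_axiom_def by blast
      have "p \<in> sp ((X - {x}) \<union> {x})"
        apply (rule ex)
        using nx np h e xX XP assms(2) by auto
      moreover have "(X - {x}) \<union> {x} = X" using xX by blast
      ultimately show False using assms(3) by simp
    qed
  qed
  thus ?thesis unfolding indep_iff using XP assms(2) by blast
qed

end



definition lines_of :: "'a set \<Rightarrow> 'a set set \<Rightarrow> 'a set \<Rightarrow> 'a set set" where
  "lines_of P L X = (\<lambda>A. span P L A) ` {A. A \<subseteq> X \<and> card A = 2}"

context LS
begin

abbreviation lo where "lo X \<equiv> lines_of P L X"

lemma steinitz: assumes "finite S" "S \<subseteq> P" "sp S = P"
  shows "finite I \<Longrightarrow> independent P L I \<Longrightarrow> card I \<le> card S"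
proof (induction "card (I - S)" arbitrary: I rule: less_induct)
  case less
  show ?case
  proof (cases "I \<subseteq> S")
    case True thus ?thesis using card_mono assms(1) by blast
  next
    case False
    then obtain x where x: "x \<in> I" "x \<notin> S" by blast
    define I0 where "I0 = I - {x}"
    have IP: "I \<subseteq> P" using less.prems indep_iff by blast
    hence I0P: "I0 \<subseteq> P" unfolding I0_def by blast
    have "\<not> S \<subseteq> sp I0"
    proof
      assume "S \<subseteq> sp I0"
      hence "sp S \<subseteq> sp I0" using span_span I0P by blast
      hence "x \<in> sp I0" using assms(3) IP x by blast
      thus False using less.prems(2) x indep_iff unfolding I0_def by blast
    qed
    then obtain s where s: "s \<in> S" "s \<notin> sp I0" by blast
    have "I0 \<subseteq> sp I0" using span_inc I0P by blast
    hence sI: "s \<notin> I" using s x unfolding I0_def by blast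
    have ind: "independent P L (insert s I0)"
      using indep_insert[OF indep_sub[OF less.prems(2)]] s assms(2) unfolding I0_def by blast
    have fI0: "finite I0" using less.prems(1) unfolding I0_def by blast
    have c1: "card (insert s I0) = card I"
      using card_insert_disjoint[OF fI0] sI x less.prems(1) unfolding I0_def
      by (metis Diff_iff card_Suc_Diff1)
    have "insert s I0 - S = (I - S) - {x}" using s(1) x unfolding I0_def by blast
    moreover have "card ((I - S) - {x}) < card (I - S)"
      using x less.prems(1) by (meson DiffI card_Diff1_less finite_Diff)
    ultimately have "card (insert s I0 - S) < card (I - S)" by simp
    from less.hyps[OF this] fI0 ind c1 show ?thesis by simp
  qed
qed

lemma dimX: obtains X0 where "finite X0" "X0 \<subseteq> P" "card X0 = Suc n" "sp X0 = P"
proof -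
  obtain X0 where "X0 \<subseteq> P" "card X0 = n + 1" "sp X0 = P"
    using dim unfolding is_dim_def by blast
  moreover hence "finite X0" by (intro card_ge_0_finite) simp
  ultimately show ?thesis using that by simp
qed

lemma dim_min: "finite X \<Longrightarrow> X \<subseteq> P \<Longrightarrow> sp X = P \<Longrightarrow> Suc n \<le> card X"
  using dim unfolding is_dim_def by simp

lemma indep_card: assumes "independent P L I" shows "finite I" "card I \<le> Suc n"
proof -
  obtain X0 where X0: "finite X0" "X0 \<subseteq> P" "card X0 = Suc n" "sp X0 = P" using dimX by blast
  show fI: "finite I"
  proof (rule ccontr)
    assume "infinite I"
    then obtain F where F: "F \<subseteq> I" "finite F" "card F = Suc (Suc n)"
      using infinite_arbitrarily_large by blast
    have "independent P L F" using indep_sub assms F by blast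
    hence "card F \<le> card X0" using steinitz[OF X0(1,2,4)] F by blast
    thus False using F X0 by simp
  qed
  show "card I \<le> Suc n" using steinitz[OF X0(1,2,4) fI assms] X0 by simp
qed

lemma extend: assumes "finite S" "S \<subseteq> P" "sp S = P"
  shows "independent P L I \<Longrightarrow> \<exists>Y\<subseteq>S. Y \<inter> I = {} \<and> is_base P L P (I \<union> Y)"
proof (induction "card (S - I)" arbitrary: I rule: less_induct)
  case less
  have IP: "I \<subseteq> P" using less.prems indep_iff by blast
  show ?case
  proof (cases "S \<subseteq> sp I")
    case True
    hence "sp S \<subseteq> sp I" using span_span IP by blast
    hence "sp I = P" using assms(3) span_sub_P[OF IP] by blast
    thus ?thesis using less.prems unfolding is_base_def by (intro exI[of _ "{}"]) simp
  next
    case False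
    then obtain s where s: "s \<in> S" "s \<notin> sp I" by blast
    have "I \<subseteq> sp I" using span_inc IP by blast
    hence sI: "s \<notin> I" using s by blast
    have ind: "independent P L (insert s I)" using indep_insert less.prems s assms(2) by blast
    have "S - insert s I = (S - I) - {s}" by blast
    moreover have "card ((S - I) - {s}) < card (S - I)"
      using s sI assms(1) by (meson DiffI card_Diff1_less finite_Diff)
    ultimately have "card (S - insert s I) < card (S - I)" by simp
    from less.hyps[OF this ind] obtain Y where Y: "Y \<subseteq> S" "Y \<inter> insert s I = {}" "is_base P L P (insert s I \<union> Y)"
      by blast
    have "insert s Y \<subseteq> S" "insert s Y \<inter> I = {}" "I \<union> insert s Y = insert s I \<union> Y"
      using Y s sI by blast+
    thus ?thesis using Y(3) by metis
  qed
qed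

lemma base_card: assumes "is_base P L P B" shows "finite B" "card B = Suc n"
proof -
  have i: "independent P L B" and s: "sp B = P" using assms unfolding is_base_def by blast+
  show fB: "finite B" using indep_card[OF i] by blast
  have BP: "B \<subseteq> P" using i indep_iff by blast
  show "card B = Suc n" using indep_card[OF i] dim_min[OF fB BP s] by simp
qed

lemma exists_base: assumes "independent P L I" obtains B where "is_base P L P B" "I \<subseteq> B"
proof -
  obtain X0 where X0: "finite X0" "X0 \<subseteq> P" "card X0 = Suc n" "sp X0 = P" using dimX by blast
  from extend[OF X0(1,2,4) assms] show ?thesis using that by blast
qed

lemma base_indep: "is_base P L P B \<Longrightarrow> independent P L B"
  unfolding is_base_def by blast

lemma indep_two: assumes "p \<in> P" "q \<in> P" "p \<noteq> q" shows "independent P L {p, q}"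
proof -
  have "{p,q} - {q} = {p}" "{p,q} - {p} = {q}" using assms(3) by blast+
  thus ?thesis unfolding indep_iff using span_single assms by auto
qed

lemma indep_one: "p \<in> P \<Longrightarrow> independent P L {p}"
  unfolding indep_iff using span_empty by auto

lemma mem_lines_of: "l \<in> lo X \<longleftrightarrow> (\<exists>x y. x \<in> X \<and> y \<in> X \<and> x \<noteq> y \<and> l = sp {x, y})"
  unfolding lines_of_def by (auto simp: card_2_iff)

lemma lines_of_pair: assumes "independent P L X" "A \<subseteq> X" "A' \<subseteq> X" "card A = 2" "card A' = 2" "sp A = sp A'"
  shows "A = A'"
proof -
  have XP: "X \<subseteq> P" using assms(1) indep_iff by blast
  have "A' \<subseteq> sp A'" using span_inc assms(3) XP by blast
  hence "A' \<subseteq> A" using indep_notin[OF assms(1) assms(2)] assms(3,6) by blast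
  moreover have "finite A" using assms(4) by (intro card_ge_0_finite) simp
  ultimately show ?thesis using card_subset_eq assms(4,5) by metis
qed

lemma card_lines_of: assumes "independent P L X" shows "card (lo X) = card X choose 2"
proof -
  have "inj_on (\<lambda>A. sp A) {A. A \<subseteq> X \<and> card A = 2}"
    unfolding inj_on_def using lines_of_pair[OF assms] by blast
  hence "card (lo X) = card {A. A \<subseteq> X \<and> card A = 2}"
    unfolding lines_of_def by (rule card_image)
  also have "\<dots> = card X choose 2" using n_subsets indep_card(1)[OF assms] by blast
  finally show ?thesis .
qed

lemma finite_lines_of: "independent P L X \<Longrightarrow> finite (lo X)"
  unfolding lines_of_def using indep_card(1) by simp

lemma lines_of_L: assumes "independent P L X" shows "lo X \<subseteq> L"
proof
  fix l assume "l \<in> lo X"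
  then obtain x y where "x \<in> X" "y \<in> X" "x \<noteq> y" "l = sp {x, y}" using mem_lines_of by blast
  moreover have "X \<subseteq> P" using assms indep_iff by blast
  ultimately show "l \<in> L" using span_two by blast
qed

lemma lines_of_mono: "X \<subseteq> Y \<Longrightarrow> lo X \<subseteq> lo Y"
  unfolding lines_of_def by blast

lemma indep_line_pts: assumes "independent P L X" "x \<in> X" "y \<in> X" "x \<noteq> y" "z \<in> X" "z \<in> sp {x,y}"
  shows "z = x \<or> z = y"
  using indep_notin[OF assms(1) _ assms(5,6)] assms(2,3) by blast

lemma star_char: assumes "independent P L X" "b \<in> X"
  shows "lo X - lo (X - {b}) = {sp {b, s} | s. s \<in> X - {b}}"
proof
  show "lo X - lo (X - {b}) \<subseteq> {sp {b, s} | s. s \<in> X - {b}}"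
  proof
    fix l assume l: "l \<in> lo X - lo (X - {b})"
    then obtain x y where xy: "x \<in> X" "y \<in> X" "x \<noteq> y" "l = sp {x, y}" using mem_lines_of by blast
    have "x = b \<or> y = b" using l xy mem_lines_of[of l "X - {b}"] by blast
    thus "l \<in> {sp {b, s} | s. s \<in> X - {b}}" using xy by (auto simp: insert_commute)
  qed
next
  show "{sp {b, s} | s. s \<in> X - {b}} \<subseteq> lo X - lo (X - {b})"
  proof
    fix l assume "l \<in> {sp {b, s} | s. s \<in> X - {b}}"
    then obtain s where s: "s \<in> X" "s \<noteq> b" "l = sp {b, s}" by blast
    have "l \<in> lo X" using s assms(2) mem_lines_of by blast
    moreover have "l \<notin> lo (X - {b})"
    proof
      assume "l \<in> lo (X - {b})"
      then obtain A where A: "A \<subseteq> X - {b}" "card A = 2" "l = sp A" unfolding lines_of_def by blast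
      have "{b, s} = A" using lines_of_pair[OF assms(1), of "{b,s}" A] A s assms(2) by auto
      thus False using A by blast
    qed
    ultimately show "l \<in> lo X - lo (X - {b})" by blast
  qed
qed

lemma grass1_line: assumes "p \<in> P" "q \<in> P" "p \<noteq> q" shows "sp {p, q} \<in> Grass P L 1"
proof -
  have pq: "{p,q} \<subseteq> P" using assms by blast
  have "subspace P L (sp {p,q})" using subspace_span[OF pq] .
  moreover have "\<exists>X. finite X \<and> X \<subseteq> P \<and> card X = 1 + 1 \<and> span P L X = sp {p,q}"
    using assms pq by (intro exI[of _ "{p,q}"]) auto
  moreover have "1 + 1 \<le> card X" if X: "finite X" "X \<subseteq> P" "sp X = sp {p,q}" for X
  proof (rule ccontr)
    assume "\<not> 1 + 1 \<le> card X"
    hence "card X \<le> 1" by simp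
    hence "X = {} \<or> (\<exists>z. X = {z})" using X(1) by (metis card_0_eq card_1_singletonE le_Suc_eq One_nat_def le_zero_eq)
    hence "\<exists>z. sp X \<subseteq> {z}" using span_empty span_single X(2) by (metis empty_subsetI insert_subset subset_refl)
    moreover have "{p,q} \<subseteq> sp {p,q}" using span_inc pq by blast
    ultimately show False using X(3) assms(3) by blast
  qed
  ultimately show ?thesis unfolding Grass_def is_dim_def by auto
qed

lemma base_subset_eq: assumes "independent P L B" shows "base_subset P L 1 B = lo B"
proof
  have BP: "B \<subseteq> P" using assms indep_iff by blast
  show "lo B \<subseteq> base_subset P L 1 B"
  proof
    fix l assume "l \<in> lo B"
    then obtain x y where xy: "x \<in> B" "y \<in> B" "x \<noteq> y" "l = sp {x, y}" using mem_lines_of by blast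
    have "l \<in> Grass P L 1" using grass1_line xy BP by blast
    moreover have "{x,y} \<subseteq> B" using xy by blast
    ultimately show "l \<in> base_subset P L 1 B" unfolding base_subset_def using xy(4) by blast
  qed
  show "base_subset P L 1 B \<subseteq> lo B"
  proof
    fix S assume "S \<in> base_subset P L 1 B"
    then obtain X where S: "is_dim P L S 1" "X \<subseteq> B" "sp X = S"
      unfolding base_subset_def Grass_def by blast
    have "\<exists>X. finite X \<and> X \<subseteq> P \<and> card X = 1 + 1 \<and> sp X = S"
      using S(1) unfolding is_dim_def by blast
    then obtain X0 where X0: "finite X0" "X0 \<subseteq> P" "card X0 = 2" "sp X0 = S"
      by auto
    obtain u v where uv: "X0 = {u,v}" "u \<noteq> v" using X0(3) card_2_iff by metis
    have SL: "S \<in> L" using span_two X0 uv by blast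
    have fX: "finite X" using S(2) indep_card(1)[OF assms] finite_subset by blast
    have XP: "X \<subseteq> P" using S(2) BP by blast
    have "\<forall>X. finite X \<and> X \<subseteq> P \<and> sp X = S \<longrightarrow> 1 + 1 \<le> card X"
      using S(1) unfolding is_dim_def by blast
    hence c2: "2 \<le> card X" using fX XP S(3) by auto
    have "card X = 2"
    proof (rule ccontr)
      assume "card X \<noteq> 2"
      hence "3 \<le> card X" using c2 by simp
      then obtain T where "T \<subseteq> X" "card T = 3" using obtain_subset_with_card_n by metis
      then obtain x y z where xyz: "x \<in> X" "y \<in> X" "z \<in> X" "x \<noteq> y" "x \<noteq> z" "y \<noteq> z"
        unfolding card_3_iff by blast
      have "X \<subseteq> S" using span_inc XP S(3) by blast
      hence "sp {x,y} = S" using span_two_line[OF SL] xyz by blast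
      hence "z \<in> sp {x,y}" using xyz \<open>X \<subseteq> S\<close> by blast
      thus False using indep_line_pts[OF assms, of x y z] xyz S(2) by blast
    qed
    thus "S \<in> lo B" unfolding lines_of_def using S by blast
  qed
qed

end



context LS
begin

lemma ex_exch: "X \<subseteq> P \<Longrightarrow> p1 \<in> P - sp X \<Longrightarrow> p2 \<in> P - sp X \<Longrightarrow>
        p2 \<in> sp (X \<union> {p1}) \<Longrightarrow> p1 \<in> sp (X \<union> {p2})"
  using exch unfolding exchange_axiom_def by blast

lemma span_pair_sub: "x \<in> sp Y \<Longrightarrow> y \<in> sp Y \<Longrightarrow> Y \<subseteq> P \<Longrightarrow> sp {x,y} \<subseteq> sp Y"
  by (rule span_span) auto

lemma third_point: assumes "l \<in> L" obtains r where "r \<in> l" "r \<noteq> x" "r \<noteq> y"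
proof -
  obtain a b c where "a \<in> l" "b \<in> l" "c \<in> l" "a \<noteq> b" "a \<noteq> c" "b \<noteq> c"
    using p2 assms unfolding axiom_P2_def by blast
  thus ?thesis using that by metis
qed

lemma generic_point:
  assumes B: "is_base P L P B" and b: "b \<in> B" and s1: "s1 \<in> B" "s1 \<noteq> b" and s2: "s2 \<in> B" "s2 \<noteq> b" "s1 \<noteq> s2"
  obtains p where "p \<in> P" "p \<notin> B" "is_base P L P (insert p (B - {b}))"
    "lo B \<inter> lo (insert p (B - {b})) = lo (B - {b})"
proof -
  define S where "S = B - {b}"
  have indB: "independent P L B" using B base_indep by blast
  have BP: "B \<subseteq> P" using indB indep_iff by blast
  have SP: "S \<subseteq> P" using BP S_def by blast
  have indS: "independent P L S" using indep_sub[OF indB] S_def by blast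
  have nb: "b \<notin> sp S" using indB b indep_iff S_def by blast
  have bP: "b \<in> P" "s1 \<in> P" "s2 \<in> P" using BP b s1 s2 by blast+
  define l1 where "l1 = sp {b, s1}"
  have l1L: "l1 \<in> L" unfolding l1_def using span_two bP s1 by metis
  have bl1: "b \<in> l1" "s1 \<in> l1" unfolding l1_def using span_inc[of "{b,s1}"] bP by auto
  have s2l1: "s2 \<notin> l1" unfolding l1_def using indep_line_pts[OF indB b s1(1) _ s2(1)] s1 s2 by metis
  obtain q where q: "q \<in> l1" "q \<noteq> b" "q \<noteq> s1" using third_point[OF l1L] by metis
  have qP: "q \<in> P" using q l1L line_sub by blast
  have qs2: "q \<noteq> s2" using q s2l1 by blast
  define l2 where "l2 = sp {q, s2}"
  have l2L: "l2 \<in> L" unfolding l2_def using span_two qP bP qs2 by metis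
  have ql2: "q \<in> l2" "s2 \<in> l2" unfolding l2_def using span_inc[of "{q,s2}"] bP qP by auto
  obtain p where p: "p \<in> l2" "p \<noteq> q" "p \<noteq> s2" using third_point[OF l2L] by metis
  have pP: "p \<in> P" using p l2L line_sub by blast
  have l12: "l1 \<noteq> l2" using s2l1 ql2 by blast
  have npS: "p \<notin> sp S"
  proof
    assume pS: "p \<in> sp S"
    have s2S: "s2 \<in> sp S" using span_inc[OF SP] s2 S_def by blast
    have "sp {p, s2} = l2" using span_two_line[OF l2L p(1) ql2(2) p(3)] .
    moreover have "sp {p, s2} \<subseteq> sp S" using span_pair_sub[OF pS s2S SP] .
    ultimately have "q \<in> sp S" using ql2 by blast
    have s1S: "s1 \<in> sp S" using span_inc[OF SP] s1 S_def by blast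
    have "sp {q, s1} = l1" using span_two_line[OF l1L q(1) bl1(2) q(3)] .
    moreover have "sp {q, s1} \<subseteq> sp S" using span_pair_sub[OF \<open>q \<in> sp S\<close> s1S SP] .
    ultimately show False using nb bl1 by blast
  qed
  have pS: "p \<notin> S" using npS span_inc[OF SP] by blast
  have pb: "p \<noteq> b"
  proof
    assume "p = b"
    hence "sp {q, b} = l2" using span_two_line[OF l2L ql2(1) p(1)] q by metis
    moreover have "sp {q, b} = l1" using span_two_line[OF l1L q(1) bl1(1) q(2)] .
    ultimately show False using l12 by simp
  qed
  hence pB: "p \<notin> B" using pS S_def by blast
  define C where "C = insert p S"
  have indC: "independent P L C" unfolding C_def using indep_insert[OF indS pP npS] .
  have "b \<in> sp (S \<union> {p})"
  proof (rule ex_exch[OF SP])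
    show "b \<in> P - sp S" using bP nb by blast
    show "p \<in> P - sp S" using pP npS by blast
    have "S \<union> {b} = B" using b S_def by blast
    moreover have "sp B = P" using B unfolding is_base_def by blast
    ultimately show "p \<in> sp (S \<union> {b})" using pP by simp
  qed
  hence bC: "b \<in> sp C" unfolding C_def by simp
  have CP: "C \<subseteq> P" using indC indep_iff by blast
  have "B \<subseteq> sp C" using bC span_inc[OF CP] unfolding C_def S_def by blast
  hence "sp B \<subseteq> sp C" using span_span CP by blast
  moreover have "sp B = P" using B unfolding is_base_def by blast
  ultimately have "sp C = P" using span_sub_P[OF CP] by blast
  hence baseC: "is_base P L P C" using indC unfolding is_base_def by blast
  have "lo B \<inter> lo C \<subseteq> lo S"
  proof
    fix l assume l: "l \<in> lo B \<inter> lo C"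
    show "l \<in> lo S"
    proof (rule ccontr)
      assume nl: "l \<notin> lo S"
      have "l \<in> lo B - lo (B - {b})" using l nl S_def by blast
      then obtain s where s: "s \<in> B" "s \<noteq> b" "l = sp {b, s}" using star_char[OF indB b] by blast
      have "C - {p} = S" unfolding C_def using pS by blast
      hence "l \<in> lo C - lo (C - {p})" using l nl by simp
      then obtain t where t: "t \<in> C" "t \<noteq> p" "l = sp {p, t}" using star_char[OF indC] C_def by blast
      have tS: "t \<in> S" using t C_def by blast
      have tP: "t \<in> P" using tS SP by blast
      have "t \<in> sp {p, t}" using span_inc[of "{p,t}"] pP tP by blast
      hence "t \<in> sp {b, s}" using s t by simp
      hence "t = b \<or> t = s" using indep_line_pts[OF indB b s(1) s(2)[symmetric]] tS S_def by blast
      hence ts: "t = s" using tS S_def by blast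
      have "p \<in> sp {b, s}" using span_inc[of "{p,t}"] pP tP s t by blast
      have sP: "s \<in> P" using s BP by blast
      have l3L: "sp {b, s} \<in> L" using span_two bP sP s by metis
      have bl3: "b \<in> sp {b,s}" "s \<in> sp {b,s}" using span_inc[of "{b,s}"] bP sP by auto
      show False
      proof (cases "s = s1")
        case True
        have "q \<in> sp {b, s}" using True q l1_def by simp
        have "sp {b, s} = l2" using two_lines[OF l3L l2L \<open>q \<in> sp {b,s}\<close> ql2(1) \<open>p \<in> sp {b,s}\<close> p(1) p(2)[symmetric]] .
        thus False using True l1_def l12 by simp
      next
        case F1: False
        show False
        proof (cases "s = s2")
          case True
          have s2l3: "s2 \<in> sp {b,s}" using bl3(2) True by simp
          have "sp {b, s} = l2" using two_lines[OF l3L l2L \<open>p \<in> sp {b,s}\<close> p(1) s2l3 ql2(2) p(3)] .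
          hence "q \<in> sp {b, s}" using ql2 by simp
          have "sp {b, s} = l1" using two_lines[OF l3L l1L bl3(1) bl1(1) \<open>q \<in> sp {b,s}\<close> q(1) q(2)[symmetric]] .
          thus False using \<open>sp {b, s} = l2\<close> l12 by simp
        next
          case F2: False
          define T where "T = {b, s1, s2}"
          have TP: "T \<subseteq> P" using T_def bP by blast
          have "{b, s1} \<subseteq> T" unfolding T_def by blast
          hence "l1 \<subseteq> sp T" unfolding l1_def using span_mono[OF _ TP] by blast
          hence "q \<in> sp T" using q by blast
          moreover have "s2 \<in> sp T" using span_inc[OF TP] T_def by blast
          ultimately have "l2 \<subseteq> sp T" unfolding l2_def using span_pair_sub[OF _ _ TP] by blast
          hence "p \<in> sp T" using p by blast
          moreover have "b \<in> sp T" using span_inc[OF TP] T_def by blast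
          ultimately have "sp {b, p} \<subseteq> sp T" using span_pair_sub[OF _ _ TP] by blast
          moreover have "sp {b, p} = sp {b, s}" using span_two_swap[OF bP(1) sP] s \<open>p \<in> sp {b, s}\<close> pb by metis
          ultimately have "s \<in> sp T" using bl3 by blast
          moreover have "T \<subseteq> B" using T_def b s1 s2 by blast
          ultimately have "s \<in> T" using indep_notin[OF indB _ s(1)] by blast
          thus False using T_def s F1 F2 by blast
        qed
      qed
    qed
  qed
  moreover have "lo S \<subseteq> lo B" "lo S \<subseteq> lo C" using lines_of_mono C_def S_def by blast+
  ultimately have "lo B \<inter> lo C = lo S" by blast
  thus ?thesis using that pP pB baseC unfolding C_def S_def by blast
qed

end



lemma two_choose2: "2 * (n choose 2) = n * (n - 1)"
proof (induction n)
  case 0 thus ?case by simp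
next
  case (Suc n)
  have "Suc n choose 2 = n + (n choose 2)"
    by (simp add: numeral_2_eq_2)
  thus ?case using Suc by (cases n) (auto simp: algebra_simps)
qed

lemma count_arith:
  fixes n d e :: nat
  assumes "4 \<le> n" "d + e = n + 1" "2 \<le> e" "n choose 2 \<le> (d choose 2) + e"
  shows False
proof -
  obtain m where m: "n = m + 4" using assms(1) le_Suc_ex by (metis add.commute)
  have h: "n * (n - 1) \<le> d * (d - 1) + 2 * e"
    using assms(4) two_choose2[of n] two_choose2[of d] by linarith
  have d1: "d \<le> m + 3" using assms m by linarith
  have "d * (d - 1) \<le> d * (m + 2)" using d1 by (intro mult_le_mono2) linarith
  moreover have "d * m \<le> (m + 3) * m" using d1 by (intro mult_le_mono1) linarith
  moreover have "d * (m + 2) = d * m + 2 * d" by (simp add: algebra_simps)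
  moreover have "n * (n - 1) = (m + 3) * m + 4 * (m + 3)" unfolding m by (simp add: algebra_simps)
  ultimately have "(m + 3) * m + 4 * (m + 3) \<le> (m + 3) * m + 2 * d + 2 * e" using h by linarith
  thus False using assms(2) m by simp
qed




context LS
begin

lemma meet_in_base: assumes C: "independent P L C" and l: "l1 \<in> lo C" "l2 \<in> lo C" "l1 \<noteq> l2"
  and x: "x \<in> l1" "x \<in> l2" shows "x \<in> C"
proof (rule ccontr)
  assume xC: "x \<notin> C"
  have CP: "C \<subseteq> P" using C indep_iff by blast
  obtain c1 c2 where c12: "c1 \<in> C" "c2 \<in> C" "c1 \<noteq> c2" "l1 = sp {c1, c2}" using l(1) mem_lines_of by blast
  obtain c3 c4 where c34: "c3 \<in> C" "c4 \<in> C" "c3 \<noteq> c4" "l2 = sp {c3, c4}" using l(2) mem_lines_of by blast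
  have L1: "l1 \<in> L" "l2 \<in> L" using lines_of_L[OF C] l by blast+
  have in1: "c1 \<in> l1" "c2 \<in> l1" using c12 span_inc[of "{c1,c2}"] CP by auto
  have in2: "c3 \<in> l2" "c4 \<in> l2" using c34 span_inc[of "{c3,c4}"] CP by auto
  have nc: "c \<notin> l2" if "c \<in> l1" "c \<in> C" for c
  proof
    assume "c \<in> l2"
    have "c \<noteq> x" using that xC by blast
    thus False using two_lines[OF L1 that(1) \<open>c \<in> l2\<close> x] l(3) by blast
  qed
  have d: "c1 \<noteq> c3" "c1 \<noteq> c4" "c2 \<noteq> c3" "c2 \<noteq> c4" using nc in1 in2 c12 by blast+
  have P1: "c1 \<in> P" "c2 \<in> P" "c3 \<in> P" "c4 \<in> P" using CP c12 c34 by blast+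
  have xc1: "x \<noteq> c1" using xC c12 by blast
  have "sp {c1, x} = sp {c1, c2}" using span_two_swap[OF P1(1,2) c12(3)] x(1) c12(4) xc1 by blast
  hence c2x: "c2 \<in> sp {c1, x}" using in1 c12(4) by simp
  define T where "T = {c1, c3, c4}"
  have TP: "T \<subseteq> P" using T_def P1 by blast
  have "{c3,c4} \<subseteq> T" using T_def by blast
  hence "l2 \<subseteq> sp T" using c34(4) span_mono[OF _ TP] by blast
  hence "x \<in> sp T" using x by blast
  moreover have "c1 \<in> sp T" using span_inc[OF TP] T_def by blast
  ultimately have "sp {c1, x} \<subseteq> sp T" using span_pair_sub[OF _ _ TP] by blast
  hence "c2 \<in> sp T" using c2x by blast
  moreover have "T \<subseteq> C" using T_def c12 c34 by blast
  ultimately have "c2 \<in> T" using indep_notin[OF C _ c12(2)] by blast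
  thus False using T_def d c12(3) by blast
qed

lemma counting:
  assumes B: "is_base P L P B" and C: "is_base P L P C" and ne: "lo B \<noteq> lo C"
    and cQ: "card (lo B \<inter> lo C) = n choose 2" and n4: "4 \<le> n"
  obtains b where "b \<in> B" "lo B \<inter> lo C = lo (B - {b})"
proof -
  define Q where "Q = lo B \<inter> lo C"
  define D where "D = B \<inter> C"
  define E where "E = B - C"
  have indB: "independent P L B" and indC: "independent P L C" using B C base_indep by blast+
  have BP: "B \<subseteq> P" using indB indep_iff by blast
  have fB: "finite B" "card B = Suc n" using base_card[OF B] by blast+
  have fC: "finite C" "card C = Suc n" using base_card[OF C] by blast+
  have Ene: "E \<noteq> {}"
  proof
    assume "E = {}"
    hence "B \<subseteq> C" unfolding E_def by blast
    hence "B = C" using card_subset_eq[OF fC(1)] fB fC by metis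
    thus False using ne by simp
  qed
  have fE: "finite E" using fB E_def by blast
  have fD: "finite D" using fB D_def by blast
  have BDE: "card D + card E = Suc n"
  proof -
    have "B = D \<union> E" "D \<inter> E = {}" unfolding D_def E_def by blast+
    thus ?thesis using card_Un_disjoint[OF fD fE] fB by simp
  qed
  have indD: "independent P L D" using indep_sub[OF indB] D_def by blast
  define Qx where "Qx x = {l \<in> Q. x \<in> l}" for x
  have sub: "Q \<subseteq> lo D \<union> (\<Union>x\<in>E. Qx x)"
  proof
    fix l assume lQ: "l \<in> Q"
    then obtain x y where xy: "x \<in> B" "y \<in> B" "x \<noteq> y" "l = sp {x, y}" using mem_lines_of Q_def by blast
    have xyl: "x \<in> l" "y \<in> l" using xy span_inc[of "{x,y}"] BP by auto
    show "l \<in> lo D \<union> (\<Union>x\<in>E. Qx x)"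
    proof (cases "x \<in> C \<and> y \<in> C")
      case True
      hence "l \<in> lo D" using xy mem_lines_of[of l D] D_def by blast
      thus ?thesis by blast
    next
      case False
      hence "x \<in> E \<or> y \<in> E" using xy E_def by blast
      thus ?thesis using xyl lQ Qx_def by blast
    qed
  qed
  have fQ: "finite Q" using finite_lines_of[OF indB] Q_def by blast
  have Qx1: "card (Qx x) \<le> 1" if "x \<in> E" for x
  proof -
    have "finite (Qx x)" using fQ Qx_def by simp
    moreover have "\<forall>a1\<in>Qx x. \<forall>a2\<in>Qx x. a1 = a2"
    proof (intro ballI)
      fix a1 a2 assume a: "a1 \<in> Qx x" "a2 \<in> Qx x"
      show "a1 = a2"
      proof (rule ccontr)
        assume "a1 \<noteq> a2"
        hence "x \<in> C" using meet_in_base[OF indC, of a1 a2 x] a Qx_def Q_def by blast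
        thus False using that E_def by blast
      qed
    qed
    ultimately show ?thesis using card_le_Suc0_iff_eq by (metis One_nat_def)
  qed
  have "card (\<Union>x\<in>E. Qx x) \<le> (\<Sum>x\<in>E. card (Qx x))" using card_UN_le[OF fE] .
  also have "\<dots> \<le> (\<Sum>x\<in>E. 1)" using Qx1 by (intro sum_mono) blast
  also have "\<dots> = card E" by simp
  finally have cU: "card (\<Union>x\<in>E. Qx x) \<le> card E" .
  have "card Q \<le> card (lo D \<union> (\<Union>x\<in>E. Qx x))"
  proof (rule card_mono)
    have "(\<Union>x\<in>E. Qx x) \<subseteq> Q" unfolding Qx_def by blast
    hence "finite (\<Union>x\<in>E. Qx x)" using fQ finite_subset by blast
    thus "finite (lo D \<union> (\<Union>x\<in>E. Qx x))" using finite_lines_of[OF indD] by blast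
  qed (rule sub)
  also have "\<dots> \<le> card (lo D) + card (\<Union>x\<in>E. Qx x)" by (rule card_Un_le)
  finally have "card Q \<le> (card D choose 2) + card E" using cU card_lines_of[OF indD] by linarith
  hence "n choose 2 \<le> (card D choose 2) + card E" using cQ Q_def by simp
  hence cE: "card E = 1"
  proof -
    assume h: "n choose 2 \<le> (card D choose 2) + card E"
    have "card E \<ge> 1" using Ene fE by (simp add: Suc_leI card_gt_0_iff)
    moreover have "\<not> 2 \<le> card E" using count_arith[OF n4 _ _ h] BDE by auto
    ultimately show ?thesis by linarith
  qed
  then obtain b where Eb: "E = {b}" using card_1_singletonE by blast
  have bB: "b \<in> B" using Eb E_def by blast
  have DB: "D = B - {b}" using Eb unfolding D_def E_def by blast
  have "lo D \<subseteq> Q" unfolding Q_def D_def using lines_of_mono by blast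
  moreover have "card D = n" using BDE cE by simp
  hence "card (lo D) = card Q" using card_lines_of[OF indD] cQ Q_def by simp
  ultimately have "lo D = Q" using card_subset_eq[OF fQ] by blast
  thus ?thesis using that bB DB Q_def by blast
qed

end



locale MAIN = A: LS P L n + B: LS P' L' n
  for P :: "'a set" and L :: "'a set set" and P' :: "'b set" and L' :: "'b set set" and n :: nat +
  fixes f :: "'a set \<Rightarrow> 'b set"
  assumes n4: "4 \<le> n" and finj: "inj_on f L" and fL: "f ` L \<subseteq> L'"
    and hyp: "\<forall>B. is_base P L P B \<longrightarrow>
           (\<exists>B'. is_base P' L' P' B' \<and> f ` base_subset P L 1 B = base_subset P' L' 1 B')"
begin

lemma hyp': assumes "is_base P L P B" obtains B' where "is_base P' L' P' B'" "f ` A.lo B = B.lo B'"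
proof -
  obtain B' where B': "is_base P' L' P' B'" "f ` base_subset P L 1 B = base_subset P' L' 1 B'"
    using hyp assms by blast
  thus ?thesis using that A.base_subset_eq[OF A.base_indep[OF assms]] B.base_subset_eq[OF B.base_indep[OF B'(1)]]
    by metis
qed

lemma two_others: assumes "is_base P L P B" "b \<in> B"
  obtains s1 s2 where "s1 \<in> B" "s2 \<in> B" "s1 \<noteq> b" "s2 \<noteq> b" "s1 \<noteq> s2"
proof -
  have "card (B - {b}) = n" using A.base_card[OF assms(1)] assms(2) by simp
  hence "2 \<le> card (B - {b})" using n4 by simp
  then obtain T where "T \<subseteq> B - {b}" "card T = 2" using obtain_subset_with_card_n by metis
  thus ?thesis using that unfolding card_2_iff by blast
qed

lemma starA: assumes B: "is_base P L P B" and b: "b \<in> B" and B': "is_base P' L' P' B'"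
  and fB: "f ` A.lo B = B.lo B'"
  obtains b' where "b' \<in> B'" "f ` (A.lo B - A.lo (B - {b})) = B.lo B' - B.lo (B' - {b'})"
proof -
  obtain s1 s2 where s: "s1 \<in> B" "s2 \<in> B" "s1 \<noteq> b" "s2 \<noteq> b" "s1 \<noteq> s2"
    using two_others[OF B b] by blast
  obtain p where p: "p \<in> P" "p \<notin> B" "is_base P L P (insert p (B - {b}))"
    "A.lo B \<inter> A.lo (insert p (B - {b})) = A.lo (B - {b})"
    using A.generic_point[OF B b s(1) s(3) s(2) s(4) s(5)] by blast
  define C where "C = insert p (B - {b})"
  obtain C' where C': "is_base P' L' P' C'" "f ` A.lo C = B.lo C'" using hyp' p(3) C_def by blast
  have indB: "independent P L B" using A.base_indep B by blast
  have indC: "independent P L C" using A.base_indep p(3) C_def by blast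
  have LB: "A.lo B \<subseteq> L" using A.lines_of_L[OF indB] .
  have LC: "A.lo C \<subseteq> L" using A.lines_of_L[OF indC] .
  have "f ` (A.lo B \<inter> A.lo C) = f ` A.lo B \<inter> f ` A.lo C"
    using inj_on_image_Int[OF finj LB LC] .
  hence Q: "B.lo B' \<inter> B.lo C' = f ` A.lo (B - {b})" using fB C'(2) p(4) C_def by simp
  have indS: "independent P L (B - {b})" using A.indep_sub[OF indB] by blast
  have "card (f ` A.lo (B - {b})) = card (A.lo (B - {b}))"
    using card_image inj_on_subset[OF finj] A.lines_of_L[OF indS] by blast
  also have "\<dots> = n choose 2" using A.card_lines_of[OF indS] A.base_card[OF B] b by simp
  finally have cQ: "card (B.lo B' \<inter> B.lo C') = n choose 2" using Q by simp
  have ne: "B.lo B' \<noteq> B.lo C'"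
  proof
    assume "B.lo B' = B.lo C'"
    hence "f ` A.lo B = f ` A.lo C" using fB C'(2) by simp
    hence "A.lo B = A.lo C" using inj_on_image_eq_iff[OF finj LB LC] by blast
    hence "A.lo B = A.lo (B - {b})" using p(4) C_def by simp
    moreover have "A.sp {b, s1} \<in> A.lo B - A.lo (B - {b})" using A.star_char[OF indB b] s by blast
    ultimately show False by blast
  qed
  obtain b' where b': "b' \<in> B'" "B.lo B' \<inter> B.lo C' = B.lo (B' - {b'})"
    using B.counting[OF B' C'(1) ne cQ n4] by blast
  have "f ` (A.lo B - A.lo (B - {b})) = f ` A.lo B - f ` A.lo (B - {b})"
  proof -
    have "A.lo B - A.lo (B - {b}) \<subseteq> L" using LB by blast
    thus ?thesis using inj_on_image_set_diff[OF finj _ A.lines_of_L[OF indS]] by blast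
  qed
  also have "\<dots> = B.lo B' - B.lo (B' - {b'})" using fB Q b'(2) by simp
  finally show ?thesis using that b'(1) by blast
qed

lemma star_center: assumes B: "is_base P L P B" and b: "b \<in> B" and B': "is_base P' L' P' B'"
  and b': "b' \<in> B'" and st: "f ` (A.lo B - A.lo (B - {b})) = B.lo B' - B.lo (B' - {b'})"
  and s: "s \<in> B" "s \<noteq> b"
  shows "b' \<in> f (A.sp {b, s})"
proof -
  have indB: "independent P L B" using A.base_indep B by blast
  have indB': "independent P' L' B'" using B.base_indep B' by blast
  have "A.sp {b, s} \<in> A.lo B - A.lo (B - {b})" using A.star_char[OF indB b] s by blast
  hence "f (A.sp {b, s}) \<in> B.lo B' - B.lo (B' - {b'})" using st by blast
  then obtain t where t: "t \<in> B'" "t \<noteq> b'" "f (A.sp {b, s}) = B.sp {b', t}"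
    using B.star_char[OF indB' b'] by blast
  have "B' \<subseteq> P'" using indB' B.indep_iff by blast
  thus ?thesis using t b' B.span_inc[of "{b', t}"] by auto
qed

definition g where "g p = (SOME x. \<forall>l\<in>L. p \<in> l \<longrightarrow> x \<in> f l)"

lemma g_prop: assumes pP: "p \<in> P" shows "\<forall>l\<in>L. p \<in> l \<longrightarrow> g p \<in> f l"
proof -
  have "independent P L {p}" using A.indep_one pP .
  then obtain B0 where B0: "is_base P L P B0" "{p} \<subseteq> B0" using A.exists_base by metis
  have pB0: "p \<in> B0" using B0 by blast
  obtain B0' where B0': "is_base P' L' P' B0'" "f ` A.lo B0 = B.lo B0'" using hyp' B0(1) by blast
  obtain b0 where b0: "b0 \<in> B0'" "f ` (A.lo B0 - A.lo (B0 - {p})) = B.lo B0' - B.lo (B0' - {b0})"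
    using starA[OF B0(1) pB0 B0'] by blast
  have indB0: "independent P L B0" using A.base_indep B0(1) by blast
  have B0P: "B0 \<subseteq> P" using indB0 A.indep_iff by blast
  have "\<forall>l\<in>L. p \<in> l \<longrightarrow> b0 \<in> f l"
  proof (intro ballI impI)
    fix l assume lL: "l \<in> L" and pl: "p \<in> l"
    obtain u v where uv: "u \<in> l" "v \<in> l" "u \<noteq> v" using A.line_two lL by blast
    obtain q where q: "q \<in> l" "q \<noteq> p" using uv by metis
    have qP: "q \<in> P" using q lL A.line_sub by blast
    have lpq: "l = A.sp {p, q}" using A.span_two_line[OF lL pl q(1) q(2)[symmetric]] by simp
    have indpq: "independent P L {p, q}" using A.indep_two pP qP q(2) by metis
    obtain Y where Y: "Y \<subseteq> B0" "Y \<inter> {p, q} = {}" "is_base P L P ({p, q} \<union> Y)"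
      using A.extend[OF A.base_card(1)[OF B0(1)] B0P _ indpq] B0(1) unfolding is_base_def by blast
    define C where "C = {p, q} \<union> Y"
    have fY: "finite Y" using Y(1) A.base_card(1)[OF B0(1)] finite_subset by blast
    have "card C = card {p, q} + card Y" unfolding C_def using Y(2) fY by (intro card_Un_disjoint) auto
    hence "card Y = n - 1" using A.base_card(2)[OF Y(3)] q(2) C_def by simp
    hence "2 \<le> card Y" using n4 by simp
    then obtain T where "T \<subseteq> Y" "card T = 2" using obtain_subset_with_card_n by metis
    then obtain r1 r2 where r: "r1 \<in> Y" "r2 \<in> Y" "r1 \<noteq> r2" unfolding card_2_iff by blast
    have rp: "r1 \<noteq> p" "r2 \<noteq> p" "r1 \<noteq> q" "r2 \<noteq> q" using r Y(2) by blast+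
    have baseC: "is_base P L P C" using Y(3) C_def by simp
    have pC: "p \<in> C" "q \<in> C" "r1 \<in> C" "r2 \<in> C" using C_def r by blast+
    obtain C' where C': "is_base P' L' P' C'" "f ` A.lo C = B.lo C'" using hyp' baseC by blast
    obtain c where c: "c \<in> C'" "f ` (A.lo C - A.lo (C - {p})) = B.lo C' - B.lo (C' - {c})"
      using starA[OF baseC pC(1) C'] by blast
    have c1: "c \<in> f (A.sp {p, q})" using star_center[OF baseC pC(1) C'(1) c pC(2) q(2)] .
    have c2: "c \<in> f (A.sp {p, r1})" "c \<in> f (A.sp {p, r2})"
      using star_center[OF baseC pC(1) C'(1) c] pC rp by blast+
    have d2: "b0 \<in> f (A.sp {p, r1})" "b0 \<in> f (A.sp {p, r2})"
      using star_center[OF B0(1) pB0 B0'(1) b0] Y(1) r rp by blast+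
    have indC: "independent P L C" using A.base_indep baseC by blast
    have CP: "C \<subseteq> P" using indC A.indep_iff by blast
    have Lr: "A.sp {p, r1} \<in> L" "A.sp {p, r2} \<in> L" using A.span_two pC CP rp by blast+
    have "A.sp {p, r1} \<noteq> A.sp {p, r2}"
    proof
      assume "A.sp {p, r1} = A.sp {p, r2}"
      moreover have "r2 \<in> A.sp {p, r2}" using A.span_inc[of "{p, r2}"] pC CP by blast
      ultimately have "r2 = p \<or> r2 = r1" using A.indep_line_pts[OF indC pC(1) pC(3) rp(1)[symmetric] pC(4)] by simp
      thus False using rp r by blast
    qed
    hence "f (A.sp {p, r1}) \<noteq> f (A.sp {p, r2})" using finj Lr unfolding inj_on_def by blast
    moreover have "f (A.sp {p, r1}) \<in> L'" "f (A.sp {p, r2}) \<in> L'" using fL Lr by blast+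
    ultimately have "c = b0" using B.two_lines c2 d2 by blast
    thus "b0 \<in> f l" using c1 lpq by simp
  qed
  hence "\<exists>x. \<forall>l\<in>L. p \<in> l \<longrightarrow> x \<in> f l" by blast
  thus ?thesis unfolding g_def by (rule someI_ex)
qed

lemma g_center: assumes B: "is_base P L P B" and b: "b \<in> B" and B': "is_base P' L' P' B'"
  and b': "b' \<in> B'" and st: "f ` (A.lo B - A.lo (B - {b})) = B.lo B' - B.lo (B' - {b'})"
  shows "g b = b'"
proof -
  obtain s1 s2 where s: "s1 \<in> B" "s2 \<in> B" "s1 \<noteq> b" "s2 \<noteq> b" "s1 \<noteq> s2"
    using two_others[OF B b] by blast
  have indB: "independent P L B" using A.base_indep B by blast
  have BP: "B \<subseteq> P" using indB A.indep_iff by blast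
  have Ls: "A.sp {b, s1} \<in> L" "A.sp {b, s2} \<in> L" using A.span_two BP b s by blast+
  have bin: "b \<in> A.sp {b, s1}" "b \<in> A.sp {b, s2}" using A.span_inc[of "{b, s1}"] A.span_inc[of "{b, s2}"] BP b s by auto
  have "A.sp {b, s1} \<noteq> A.sp {b, s2}"
  proof
    assume "A.sp {b, s1} = A.sp {b, s2}"
    moreover have "s2 \<in> A.sp {b, s2}" using A.span_inc[of "{b, s2}"] BP b s by blast
    ultimately have "s2 = b \<or> s2 = s1" using A.indep_line_pts[OF indB b s(1) s(3)[symmetric] s(2)] by simp
    thus False using s by blast
  qed
  hence "f (A.sp {b, s1}) \<noteq> f (A.sp {b, s2})" using finj Ls unfolding inj_on_def by blast
  moreover have "f (A.sp {b, s1}) \<in> L'" "f (A.sp {b, s2}) \<in> L'" using fL Ls by blast+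
  moreover have "g b \<in> f (A.sp {b, s1})" "g b \<in> f (A.sp {b, s2})" using g_prop BP b Ls bin by blast+
  moreover have "b' \<in> f (A.sp {b, s1})" "b' \<in> f (A.sp {b, s2})"
    using star_center[OF B b B' b' st] s by blast+
  ultimately show ?thesis using B.two_lines by blast
qed

lemma g_in_base: assumes B: "is_base P L P B" and B': "is_base P' L' P' B'" and fB: "f ` A.lo B = B.lo B'"
  shows "g ` B \<subseteq> B'"
proof
  fix y assume "y \<in> g ` B"
  then obtain b where b: "b \<in> B" "y = g b" by blast
  obtain b' where b': "b' \<in> B'" "f ` (A.lo B - A.lo (B - {b})) = B.lo B' - B.lo (B' - {b'})"
    using starA[OF B b(1) B' fB] by blast
  show "y \<in> B'" using g_center[OF B b(1) B' b'] b b'(1) by simp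
qed

end



context MAIN
begin

lemma g_base: assumes "is_base P L P B" obtains B' where "is_base P' L' P' B'" "g ` B \<subseteq> B'"
  using hyp'[OF assms] g_in_base[OF assms] by metis

lemma g_P: "p \<in> P \<Longrightarrow> g p \<in> P'"
proof -
  assume pP: "p \<in> P"
  obtain B where B: "is_base P L P B" "{p} \<subseteq> B" using A.exists_base[OF A.indep_one[OF pP]] by metis
  obtain B' where B': "is_base P' L' P' B'" "g ` B \<subseteq> B'" using g_base B(1) by blast
  have "B' \<subseteq> P'" using B.base_indep[OF B'(1)] B.indep_iff by blast
  thus ?thesis using B B' by blast
qed

lemma g_indep: "independent P L X \<Longrightarrow> independent P' L' (g ` X)"
proof -
  assume "independent P L X"
  then obtain B where B: "is_base P L P B" "X \<subseteq> B" using A.exists_base by metis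
  obtain B' where B': "is_base P' L' P' B'" "g ` B \<subseteq> B'" using g_base B(1) by blast
  have "g ` X \<subseteq> B'" using B B' by blast
  thus ?thesis using B.indep_sub[OF B.base_indep[OF B'(1)]] by blast
qed

lemma g_inj: "inj_on g P"
proof (rule inj_onI)
  fix p q assume pP: "p \<in> P" and qP: "q \<in> P" and e: "g p = g q"
  show "p = q"
  proof (rule ccontr)
    assume pq: "p \<noteq> q"
    obtain C where C: "is_base P L P C" "{p, q} \<subseteq> C" using A.exists_base[OF A.indep_two[OF pP qP pq]] by metis
    have pC: "p \<in> C" "q \<in> C" using C by blast+
    obtain C' where C': "is_base P' L' P' C'" "f ` A.lo C = B.lo C'" using hyp' C(1) by blast
    obtain p' where p': "p' \<in> C'" "f ` (A.lo C - A.lo (C - {p})) = B.lo C' - B.lo (C' - {p'})"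
      using starA[OF C(1) pC(1) C'] by blast
    obtain q' where q': "q' \<in> C'" "f ` (A.lo C - A.lo (C - {q})) = B.lo C' - B.lo (C' - {q'})"
      using starA[OF C(1) pC(2) C'] by blast
    have "g p = p'" using g_center[OF C(1) pC(1) C'(1) p'] .
    moreover have "g q = q'" using g_center[OF C(1) pC(2) C'(1) q'] .
    ultimately have "p' = q'" using e by simp
    hence ff: "f ` (A.lo C - A.lo (C - {p})) = f ` (A.lo C - A.lo (C - {q}))" using p' q' by simp
    have indC: "independent P L C" using A.base_indep C(1) by blast
    have LC: "A.lo C \<subseteq> L" using A.lines_of_L[OF indC] .
    have "A.lo C - A.lo (C - {p}) = A.lo C - A.lo (C - {q})"
      using inj_on_image_eq_iff[OF finj, of "A.lo C - A.lo (C - {p})" "A.lo C - A.lo (C - {q})"] ff LC by blast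
    obtain s1 s2 where s: "s1 \<in> C" "s2 \<in> C" "s1 \<noteq> p" "s2 \<noteq> p" "s1 \<noteq> s2"
      using two_others[OF C(1) pC(1)] by blast
    obtain r where r: "r \<in> C" "r \<noteq> p" "r \<noteq> q" using s by metis
    have "A.sp {p, r} \<in> A.lo C - A.lo (C - {p})" using A.star_char[OF indC pC(1)] r by blast
    hence "A.sp {p, r} \<in> A.lo C - A.lo (C - {q})"
      using \<open>A.lo C - A.lo (C - {p}) = A.lo C - A.lo (C - {q})\<close> by simp
    then obtain t where t: "t \<in> C" "t \<noteq> q" "A.sp {p, r} = A.sp {q, t}"
      using A.star_char[OF indC pC(2)] by blast
    have CP: "C \<subseteq> P" using indC A.indep_iff by blast
    have "q \<in> A.sp {q, t}" using A.span_inc[of "{q, t}"] CP pC t by blast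
    hence "q = p \<or> q = r" using A.indep_line_pts[OF indC pC(1) r(1) r(2)[symmetric] pC(2)] t by simp
    thus False using pq r by blast
  qed
qed

lemma g_line: assumes lL: "l \<in> L" shows "f l = B.sp (g ` l)"
proof -
  have lP: "l \<subseteq> P" using A.line_sub lL by blast
  have sub: "g ` l \<subseteq> f l" using g_prop lP lL by blast
  have fl: "f l \<in> L'" using fL lL by blast
  have "B.sp (g ` l) \<subseteq> f l" using B.span_least[OF B.subspace_line[OF fl] sub] .
  moreover have "f l \<subseteq> B.sp (g ` l)"
  proof -
    obtain u v where uv: "u \<in> l" "v \<in> l" "u \<noteq> v" using A.line_two lL by blast
    have "g u \<noteq> g v" using g_inj uv lP unfolding inj_on_def by blast
    moreover have "g u \<in> f l" "g v \<in> f l" using sub uv by blast+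
    ultimately have "B.sp {g u, g v} = f l" using B.span_two_line[OF fl] by blast
    moreover have "{g u, g v} \<subseteq> g ` l" using uv by blast
    moreover have "g ` l \<subseteq> P'" using g_P lP by blast
    ultimately show ?thesis using B.span_mono by blast
  qed
  ultimately show ?thesis by blast
qed

lemma indep_three: assumes "x \<in> P" "y \<in> P" "z \<in> P" "x \<noteq> y" "x \<noteq> z" "y \<noteq> z"
  "\<not> collinear_in L {x, y, z}" shows "independent P L {x, y, z}"
proof -
  have nc: "w \<notin> A.sp {u, v}" if "{u, v, w} = {x, y, z}" "u \<noteq> v" "u \<in> P" "v \<in> P" for u v w
  proof
    assume "w \<in> A.sp {u, v}"
    moreover have "A.sp {u, v} \<in> L" using A.span_two[OF that(3,4,2)] .
    moreover have "{u, v} \<subseteq> A.sp {u, v}" using A.span_inc[of "{u, v}"] that(3,4) by simp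
    ultimately have "{u, v, w} \<subseteq> A.sp {u, v}" by blast
    thus False using assms(7) that(1) \<open>A.sp {u, v} \<in> L\<close> unfolding collinear_in_def by metis
  qed
  have e: "{x, y, z} - {x} = {y, z}" "{x, y, z} - {y} = {x, z}" "{x, y, z} - {z} = {x, y}"
    using assms by blast+
  have "x \<notin> A.sp {y, z}" using nc[of y z x] assms by (metis insert_commute)
  moreover have "y \<notin> A.sp {x, z}" using nc[of x z y] assms by (metis insert_commute)
  moreover have "z \<notin> A.sp {x, y}" using nc[of x y z] assms by (metis insert_commute)
  ultimately show ?thesis unfolding A.indep_iff using e assms by auto
qed

lemma main_result: "strong_embedding P L P' L' g \<and> (\<forall>l\<in>L. f l = B.sp (g ` l))"
proof -
  have c1: "collinear_in L' {g x, g y, g z}" if col: "collinear_in L {x, y, z}" for x y z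
  proof -
    obtain l where l: "l \<in> L" "{x, y, z} \<subseteq> l" using col unfolding collinear_in_def by blast
    have "l \<subseteq> P" using A.line_sub l by blast
    hence "{g x, g y, g z} \<subseteq> f l" using g_prop l by blast
    thus ?thesis using fL l unfolding collinear_in_def by blast
  qed
  have c2: "\<not> collinear_in L' {g x, g y, g z}"
    if xyz: "x \<in> P" "y \<in> P" "z \<in> P" "x \<noteq> y" "x \<noteq> z" "y \<noteq> z" "\<not> collinear_in L {x, y, z}" for x y z
  proof
    assume "collinear_in L' {g x, g y, g z}"
    then obtain l' where l': "l' \<in> L'" "{g x, g y, g z} \<subseteq> l'" unfolding collinear_in_def by blast
    have ind: "independent P' L' {g x, g y, g z}" using g_indep[OF indep_three[OF xyz]] by simp
    have d: "g x \<noteq> g y" "g x \<noteq> g z" "g y \<noteq> g z" using g_inj xyz unfolding inj_on_def by blast+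
    have "B.sp {g y, g z} = l'" using B.span_two_line[OF l'(1)] l' d by blast
    hence "g x \<in> B.sp ({g x, g y, g z} - {g x})" using l' d by (metis insert_Diff_single insert_absorb2 insert_commute Diff_insert_absorb singletonD insertE insert_subset)
    thus False using ind B.indep_iff by blast
  qed
  have "strong_embedding P L P' L' g"
    unfolding strong_embedding_def using g_inj g_P c1 c2 g_indep by blast
  thus ?thesis using g_line by blast
qed

end

theorem theorem2p3:
  fixes P :: "'a set" and L :: "'a set set"
    and P' :: "'b set" and L' :: "'b set set"
    and f :: "'a set \<Rightarrow> 'b set" and n :: nat
  assumes "linear_space P L" and "linear_space P' L'"
    and "is_dim P L P n" and "is_dim P' L' P' n" and "n \<ge> 4"
    and "exchange_axiom P L" and "exchange_axiom P' L'"
    and "axiom_P2 L" and "axiom_P2 L'"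
    and "inj_on f L" and "f ` L \<subseteq> L'"
    and "\<forall>B. is_base P L P B \<longrightarrow>
           (\<exists>B'. is_base P' L' P' B' \<and> f ` base_subset P L 1 B = base_subset P' L' 1 B')"
  shows "\<exists>g. strong_embedding P L P' L' g \<and> (\<forall>l\<in>L. f l = span P' L' (g ` l))"
proof -
  interpret M: MAIN P L P' L' n f
    by (unfold_locales) (use assms in auto)
  show ?thesis using M.main_result by blast
qed


end
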